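(* Let $f\in C[0,1]$ (complex-valued), $u\in(0,1]$ and $\rho>0$. If $f(u)\neq0$, then there exist a constant $d>0$ and a sequence $\{\rho_k\}_{k\ge1}$ with $\rho_k\to+\infty$ such that $|\Phi_{f,u}(\rho_k)|>\rho e^{d\rho_k}$ for all $k\ge1$.
   Context: For $f\in C[0,1]$ and $u\in(0,1]$, $\Phi_{f,u}(z)=\int_0^u f(s)e^{(u-s)z}\,ds$ ($z\in\mathbb{C}$). *)

theory Defs
  imports "HOL-Analysis.Analysis"
begin

definition Phi :: "(real \<Rightarrow> complex) \<Rightarrow> real \<Rightarrow> complex \<Rightarrow> complex" where
  "Phi f u z = integral {0..u} (\<lambda>s. f s * exp (complex_of_real (u - s) * z))"

end

theory Submission imports Defs "HOL-Real_Asymp.Real_Asymp" begin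
lemma term_id:
  fixes n k :: nat and u s \<tau> :: real
  shows "complex_of_real ((- exp (real n * (u - s - \<tau>))) ^ Suc k /\<^sub>R fact (Suc k))
    = complex_of_real ((-1) ^ Suc k / fact (Suc k) * exp (- (real (Suc k) * real n * \<tau>)))
      * exp (complex_of_real (u - s) * complex_of_real (real (Suc k * n)))"
proof -
  have "(- exp (real n * (u - s - \<tau>))) ^ Suc k = (-1) ^ Suc k * exp (real n * (u - s - \<tau>)) ^ Suc k"
    by (metis power_minus)
  also have "exp (real n * (u - s - \<tau>)) ^ Suc k = exp (real (Suc k) * (real n * (u - s - \<tau>)))"
    by (metis exp_of_nat_mult)
  also have "\<dots> = exp (- (real (Suc k) * real n * \<tau>)) * exp ((u - s) * real (Suc k * n))"
    by (simp add: exp_add[symmetric] algebra_simps)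
  finally have e: "(- exp (real n * (u - s - \<tau>))) ^ Suc k /\<^sub>R fact (Suc k) =
     ((-1) ^ Suc k / fact (Suc k) * exp (- (real (Suc k) * real n * \<tau>))) * exp ((u - s) * real (Suc k * n))"
    by (simp add: divide_inverse)
  have "exp (complex_of_real (u - s) * complex_of_real (real (Suc k * n))) = complex_of_real (exp ((u - s) * real (Suc k * n)))"
    by (simp only: of_real_mult[symmetric] exp_of_real)
  then show ?thesis unfolding e by (simp only: of_real_mult)
qed

lemma exp_partial_le:
  fixes x :: real assumes "0 \<le> x"
  shows "(\<Sum>k<M. x ^ Suc k /\<^sub>R fact (Suc k)) \<le> exp x - 1"
proof -
  have S: "(\<lambda>k. x ^ Suc k /\<^sub>R fact (Suc k)) sums (exp x - 1)"
    by (subst sums_Suc_iff) (use exp_converges[of x] in simp)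
  have "(\<Sum>k<M. x ^ Suc k /\<^sub>R fact (Suc k)) \<le> (\<Sum>k. x ^ Suc k /\<^sub>R fact (Suc k))"
    by (rule sum_le_suminf) (use S assms in \<open>auto intro: sums_summable\<close>)
  also have "\<dots> = exp x - 1" using S by (rule sums_unique[symmetric])
  finally show ?thesis .
qed

lemma asy1: "(c::real) > 0 \<Longrightarrow> (\<lambda>n::nat. exp (- exp (real n * c)) - 1) \<longlonglongrightarrow> -1"
  by real_asymp
lemma asy2: "(c::real) < 0 \<Longrightarrow> (\<lambda>n::nat. exp (- exp (real n * c)) - 1) \<longlonglongrightarrow> 0"
  by real_asymp
lemma asy3: "(c::real) < 0 \<Longrightarrow> (\<lambda>n::nat. r * (exp (exp (real n * c)) - 1)) \<longlonglongrightarrow> 0"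
  by real_asymp

lemma key:
  fixes f :: "real \<Rightarrow> complex"
  assumes cont: "continuous_on {0..u} f" and u: "0 < u" and d: "0 < d" "d < \<tau>" and tu: "\<tau> \<le> u"
    and rho: "0 < \<rho>"
    and bnd: "\<And>x. x \<ge> X \<Longrightarrow> cmod (Phi f u (complex_of_real x)) \<le> \<rho> * exp (d * x)"
  shows "integral {0..u-\<tau>} f = 0"
proof -
  define w where "w n s = exp (real n * (u - s - \<tau>))" for n :: nat and s
  define Q where "Q n M s = (\<Sum>k<M. (- w n s) ^ Suc k /\<^sub>R fact (Suc k))" for n M s
  define c where "c n k = (-1) ^ Suc k / fact (Suc k) * exp (- (real (Suc k) * real n * \<tau>))" for n k :: nat
  have wpos: "w n s > 0" for n s unfolding w_def by simp
  have Qsums: "(\<lambda>M. Q n M s) \<longlonglongrightarrow> exp (- w n s) - 1" for n s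
  proof -
    have "(\<lambda>k. (- w n s) ^ Suc k /\<^sub>R fact (Suc k)) sums (exp (- w n s) - 1)"
      by (subst sums_Suc_iff) (use exp_converges[of "- w n s"] in simp)
    then show ?thesis unfolding Q_def sums_def .
  qed
  have Qbnd: "\<bar>Q n M s\<bar> \<le> exp (exp (real n * u))" if s: "s \<in> {0..u}" for n M s
  proof -
    have "\<bar>Q n M s\<bar> \<le> (\<Sum>k<M. \<bar>(- w n s) ^ Suc k /\<^sub>R fact (Suc k)\<bar>)"
      unfolding Q_def by (rule sum_abs)
    also have "\<dots> = (\<Sum>k<M. (w n s) ^ Suc k /\<^sub>R fact (Suc k))"
      using wpos[of n s] by (simp add: abs_mult power_abs)
    also have "\<dots> \<le> (\<Sum>k. (w n s) ^ Suc k /\<^sub>R fact (Suc k))"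
    proof (rule sum_le_suminf)
      have "(\<lambda>k. (w n s) ^ Suc k /\<^sub>R fact (Suc k)) sums (exp (w n s) - 1)"
        by (subst sums_Suc_iff) (use exp_converges[of "w n s"] in simp)
      then show "summable (\<lambda>k. (w n s) ^ Suc k /\<^sub>R fact (Suc k))" by (rule sums_summable)
    qed (use wpos[of n s] in auto)
    also have "\<dots> = exp (w n s) - 1"
    proof -
      have "(\<lambda>k. (w n s) ^ Suc k /\<^sub>R fact (Suc k)) sums (exp (w n s) - 1)"
        by (subst sums_Suc_iff) (use exp_converges[of "w n s"] in simp)
      then show ?thesis by (rule sums_unique[symmetric])
    qed
    also have "\<dots> \<le> exp (exp (real n * u))"
    proof -
      have "real n * (u - s - \<tau>) \<le> real n * u"
        using s d by (intro mult_left_mono) auto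
      then have "exp (real n * (u - s - \<tau>)) \<le> exp (real n * u)" by simp
      then have "exp (exp (real n * (u - s - \<tau>))) \<le> exp (exp (real n * u))" by (simp only: exp_le_cancel_iff)
      then show ?thesis unfolding w_def by linarith
    qed
    finally show ?thesis .
  qed
  have intg: "(\<lambda>s. f s * exp (complex_of_real (u - s) * z)) integrable_on {0..u}" for z
    by (rule integrable_continuous_interval) (intro continuous_intros cont)
  have ident: "integral {0..u} (\<lambda>s. f s * of_real (Q n M s)) =
      (\<Sum>k<M. of_real (c n k) * Phi f u (of_real (real (Suc k * n))))" for n M
  proof -
    have "integral {0..u} (\<lambda>s. f s * of_real (Q n M s)) =
       integral {0..u} (\<lambda>s. \<Sum>k<M. of_real (c n k) * (f s * exp (complex_of_real (u - s) * complex_of_real (real (Suc k * n)))))"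
      unfolding Q_def w_def c_def
      unfolding of_real_sum sum_distrib_left
      by (intro integral_cong sum.cong refl) (simp only: term_id ac_simps)
    also have "\<dots> = (\<Sum>k<M. integral {0..u} (\<lambda>s. of_real (c n k) * (f s * exp (complex_of_real (u - s) * complex_of_real (real (Suc k * n))))))"
      by (rule integral_sum[OF finite_lessThan]) (rule integrable_continuous_interval, intro continuous_intros cont)
    also have "\<dots> = (\<Sum>k<M. of_real (c n k) * Phi f u (of_real (real (Suc k * n))))"
      unfolding Phi_def by simp
    finally show ?thesis .
  qed
  have bound1: "cmod (integral {0..u} (\<lambda>s. f s * of_real (Q n M s))) \<le> \<rho> * (exp (exp (real n * (d - \<tau>))) - 1)"
    if n1: "n \<ge> 1" and nX: "real n \<ge> X" for n M
  proof -
    define q where "q = exp (real n * (d - \<tau>))"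
    have "cmod (integral {0..u} (\<lambda>s. f s * of_real (Q n M s))) \<le>
        (\<Sum>k<M. cmod (of_real (c n k) * Phi f u (of_real (real (Suc k * n)))))"
      unfolding ident by (rule norm_sum)
    also have "\<dots> \<le> (\<Sum>k<M. \<rho> * (q ^ Suc k /\<^sub>R fact (Suc k)))"
    proof (rule sum_mono)
      fix k assume "k \<in> {..<M}"
      have X: "real (Suc k * n) \<ge> X" proof -
        have "n \<le> Suc k * n" by simp
        then have "real n \<le> real (Suc k * n)" by (rule of_nat_mono)
        then show ?thesis using nX by linarith
      qed
      have ck: "\<bar>c n k\<bar> = exp (- (real (Suc k) * real n * \<tau>)) / fact (Suc k)"
        unfolding c_def by (simp add: abs_mult power_abs)
      have qk: "exp (- (real (Suc k) * real n * \<tau>)) * exp (d * real (Suc k * n)) = q ^ Suc k"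
        unfolding q_def exp_of_nat_mult[symmetric] exp_add[symmetric] by (simp add: algebra_simps)
      have "cmod (of_real (c n k) * Phi f u (of_real (real (Suc k * n)))) =
          \<bar>c n k\<bar> * cmod (Phi f u (of_real (real (Suc k * n))))"
        by (simp add: norm_mult)
      also have "\<dots> \<le> \<bar>c n k\<bar> * (\<rho> * exp (d * real (Suc k * n)))"
        by (intro mult_left_mono bnd X) auto
      also have "\<dots> = \<rho> * (q ^ Suc k /\<^sub>R fact (Suc k))"
        unfolding ck qk[symmetric] by (simp add: divide_inverse mult_ac)
      finally show "cmod (of_real (c n k) * Phi f u (of_real (real (Suc k * n)))) \<le> \<rho> * (q ^ Suc k /\<^sub>R fact (Suc k))" .
    qed
    also have "\<dots> = \<rho> * (\<Sum>k<M. q ^ Suc k /\<^sub>R fact (Suc k))"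
      by (simp add: sum_distrib_left)
    also have "\<dots> \<le> \<rho> * (exp q - 1)"
      using rho by (intro mult_left_mono exp_partial_le) (auto simp: q_def)
    finally show ?thesis unfolding q_def .
  qed
  have DCT1: "(\<lambda>M. integral {0..u} (\<lambda>s. f s * of_real (Q n M s))) \<longlonglongrightarrow>
      integral {0..u} (\<lambda>s. f s * of_real (exp (- w n s) - 1))" for n
  proof (rule dominated_convergence(2)[where h = "\<lambda>s. norm (f s) * exp (exp (real n * u))"])
    show "(\<lambda>s. f s * of_real (Q n M s)) integrable_on {0..u}" for M
      unfolding Q_def w_def
      by (rule integrable_continuous_interval) (intro continuous_intros cont)
    show "(\<lambda>s. norm (f s) * exp (exp (real n * u))) integrable_on {0..u}"
      by (rule integrable_continuous_interval) (intro continuous_intros cont)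
    show "norm (f s * of_real (Q n M s)) \<le> norm (f s) * exp (exp (real n * u))" if "s \<in> {0..u}" for M s
      unfolding norm_mult norm_of_real by (intro mult_left_mono Qbnd that) auto
    show "(\<lambda>M. f s * of_real (Q n M s)) \<longlonglongrightarrow> f s * of_real (exp (- w n s) - 1)" for s
      by (intro tendsto_intros Qsums)
  qed
  have bound2: "cmod (integral {0..u} (\<lambda>s. f s * of_real (exp (- w n s) - 1))) \<le> \<rho> * (exp (exp (real n * (d - \<tau>))) - 1)"
    if n1: "n \<ge> 1" and nX: "real n \<ge> X" for n
    by (rule LIMSEQ_le_const2[OF tendsto_norm[OF DCT1]]) (use bound1[OF n1 nX] in blast)
  define g where "g s = f s * of_real (if s < u - \<tau> then -1 else if s = u - \<tau> then exp (-1) - 1 else 0)" for s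
  have DCT2: "(\<lambda>n. integral {0..u} (\<lambda>s. f s * of_real (exp (- w n s) - 1))) \<longlonglongrightarrow> integral {0..u} g"
  proof (rule dominated_convergence(2)[where h = "\<lambda>s. norm (f s)"])
    show "(\<lambda>s. f s * of_real (exp (- w n s) - 1)) integrable_on {0..u}" for n
      unfolding w_def
      by (rule integrable_continuous_interval) (intro continuous_intros cont)
    show "(\<lambda>s. norm (f s)) integrable_on {0..u}"
      by (rule integrable_continuous_interval) (intro continuous_intros cont)
    show "norm (f s * of_real (exp (- w n s) - 1)) \<le> norm (f s)" if "s \<in> {0..u}" for n s
    proof -
      have "exp (- w n s) \<le> 1" using wpos[of n s] by simp
      moreover have "exp (- w n s) > 0" by simp
      ultimately have "\<bar>exp (- w n s) - 1\<bar> \<le> 1" by linarith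
      then show ?thesis unfolding norm_mult norm_of_real
        by (metis mult.right_neutral mult_left_mono norm_ge_zero)
    qed
    show "(\<lambda>n. f s * of_real (exp (- w n s) - 1)) \<longlonglongrightarrow> g s" for s
    proof (cases "s < u - \<tau>")
      case True
      then have "u - s - \<tau> > 0" by simp
      from asy1[OF this] True show ?thesis unfolding g_def w_def by (intro tendsto_intros) auto
    next
      case False
      show ?thesis
      proof (cases "s = u - \<tau>")
        case True
        then show ?thesis unfolding g_def w_def by simp
      next
        case False2: False
        with False have "u - s - \<tau> < 0" by simp
        from asy2[OF this] False False2 show ?thesis unfolding g_def w_def by (intro tendsto_intros) auto
      qed
    qed
  qed
  have lim0: "(\<lambda>n::nat. \<rho> * (exp (exp (real n * (d - \<tau>))) - 1)) \<longlonglongrightarrow> 0"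
    by (rule asy3) (use d in simp)
  have ev: "eventually (\<lambda>n. norm (integral {0..u} (\<lambda>s. f s * of_real (exp (- w n s) - 1)))
       \<le> \<rho> * (exp (exp (real n * (d - \<tau>))) - 1)) sequentially"
  proof (rule eventually_sequentiallyI[of "max 1 (nat \<lceil>X\<rceil>)"])
    fix n assume "max 1 (nat \<lceil>X\<rceil>) \<le> n"
    then have "n \<ge> 1" "real n \<ge> X" by linarith+
    then show "norm (integral {0..u} (\<lambda>s. f s * of_real (exp (- w n s) - 1)))
       \<le> \<rho> * (exp (exp (real n * (d - \<tau>))) - 1)" by (rule bound2)
  qed
  have "(\<lambda>n. integral {0..u} (\<lambda>s. f s * of_real (exp (- w n s) - 1))) \<longlonglongrightarrow> 0"
    by (rule Lim_null_comparison[OF ev lim0])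
  with DCT2 have g0: "integral {0..u} g = 0" by (rule LIMSEQ_unique)
  have "integral {0..u} g = integral {0..u} (\<lambda>s. - (if s \<in> {..u-\<tau>} then f s else 0))"
    by (rule integral_spike[of "{u - \<tau>}"]) (auto simp: g_def)
  also have "\<dots> = - integral ({..u-\<tau>} \<inter> {0..u}) f"
    by (simp only: integral_neg integral_restrict_Int)
  also have "{..u-\<tau>} \<inter> {0..u} = {0..u-\<tau>}" using d by auto
  finally show ?thesis using g0 by simp
qed

theorem lemma4p6:
  fixes f :: "real \<Rightarrow> complex" and u \<rho> :: real
  assumes "continuous_on {0..1} f"
    and "0 < u" and "u \<le> 1"
    and "0 < \<rho>"
    and "f u \<noteq> 0"
  shows "\<exists>d > 0. \<exists>r :: nat \<Rightarrow> real. filterlim r at_top sequentially \<and>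
           (\<forall>k. cmod (Phi f u (complex_of_real (r k))) > \<rho> * exp (d * r k))"
proof (rule ccontr)
  assume neg: "\<not> ?thesis"
  have contu: "continuous_on {0..u} f"
    using assms(1) by (rule continuous_on_subset) (use assms(3) in auto)
  have bnd: "\<exists>X. \<forall>x\<ge>X. cmod (Phi f u (complex_of_real x)) \<le> \<rho> * exp (d * x)" if d: "d > 0" for d
  proof (rule ccontr)
    assume "\<not> (\<exists>X. \<forall>x\<ge>X. cmod (Phi f u (complex_of_real x)) \<le> \<rho> * exp (d * x))"
    then have "\<forall>X. \<exists>x\<ge>X. cmod (Phi f u (complex_of_real x)) > \<rho> * exp (d * x)"
      by (auto simp: not_le)
    then have "\<forall>k::nat. \<exists>x. x \<ge> real k \<and> cmod (Phi f u (complex_of_real x)) > \<rho> * exp (d * x)"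
      by blast
    then have "\<exists>r. \<forall>k::nat. r k \<ge> real k \<and> cmod (Phi f u (complex_of_real (r k))) > \<rho> * exp (d * r k)"
      by (rule choice)
    then obtain r where r: "\<And>k::nat. r k \<ge> real k \<and> cmod (Phi f u (complex_of_real (r k))) > \<rho> * exp (d * r k)"
      by blast
    have "filterlim r at_top sequentially"
      by (rule filterlim_at_top_mono[OF filterlim_real_sequentially]) (use r in auto)
    with r d neg show False by blast
  qed
  have int0: "integral {0..a} f = 0" if a: "0 \<le> a" "a < u" for a
  proof -
    obtain X where X: "\<And>x. x \<ge> X \<Longrightarrow> cmod (Phi f u (complex_of_real x)) \<le> \<rho> * exp ((u - a) / 2 * x)"
      using bnd[of "(u - a) / 2"] a by auto
    have "integral {0..u - (u - a)} f = 0"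
      by (rule key[OF contu assms(2) _ _ _ assms(4) X]) (use a in auto)
    then show ?thesis by simp
  qed
  have fz: "f x = 0" if x: "x \<in> {0<..<u}" for x
  proof -
    define c where "c = (x + u) / 2"
    have c: "0 < x" "x < c" "c < u" using x by (auto simp: c_def)
    have "((\<lambda>t. integral {0..t} f) has_vector_derivative f x) (at x within {0..c})"
      by (rule integral_has_vector_derivative) (use contu c in \<open>auto intro: continuous_on_subset\<close>)
    then have D1: "((\<lambda>t. 0) has_vector_derivative f x) (at x within {0..c})"
      by (rule has_vector_derivative_transform_within[where d=1]) (use c int0 in auto)
    have D2: "((\<lambda>t. 0) has_vector_derivative 0) (at x within {0..c})"
      by (rule derivative_intros)
    show ?thesis
      by (rule vector_derivative_unique_within_closed_interval[of 0 c x "\<lambda>t. 0"])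
         (use c D1 D2 in auto)
  qed
  have "f u = 0"
    by (rule continuous_constant_on_closure[of "{0<..<u}" f]) (use contu fz assms(2) in auto)
  with assms(5) show False by simp
qed

end
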